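(* Let $a_0<a_1<\dots<a_n$ be positive integers with $\gcd(a_0,\dots,a_n)=1$ and let $t\in\mathbb{Z}_{\ge0}$. If the equation $a_0x_0+\dots+a_nx_n=t$ has a solution $x\in\mathbb{Z}_{\ge 0}^{n+1}$, then it has a solution $x\in\mathbb{Z}_{\ge0}^{n+1}$ whose support $\mathrm{supp}(x)=\{i: x_i\neq 0\}$ satisfies $|\mathrm{supp}(x)|\le \log_2(a_0)+1$. *)

theory Defs
  imports Complex_Main
begin

end

theory Submission
  imports Defs
begin

lemma exists_pair:
  fixes a :: "nat \<Rightarrow> nat" and S :: "nat set" and q :: nat
  assumes fin: "finite S" and big: "2 ^ card S > q" and q: "q > 0"
    and pos: "\<forall>i\<in>S. a i > 0"
  shows "\<exists>A B. A \<subseteq> S \<and> B \<subseteq> S \<and> A \<inter> B = {} \<and> A \<noteq> {} \<and>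
           sum a B \<le> sum a A \<and> sum a A mod q = sum a B mod q"
proof -
  let ?f = "\<lambda>T. sum a T mod q"
  have "\<not> inj_on ?f (Pow S)"
  proof
    assume inj: "inj_on ?f (Pow S)"
    have "card (?f ` Pow S) = card (Pow S)" using card_image[OF inj] .
    also have "\<dots> = 2 ^ card S" using fin by (simp add: card_Pow)
    finally have e: "card (?f ` Pow S) = 2 ^ card S" .
    have "?f ` Pow S \<subseteq> {..<q}" using q by auto
    hence "card (?f ` Pow S) \<le> q" by (metis card_lessThan card_mono finite_lessThan)
    with e big show False by simp
  qed
  then obtain T1 T2 where T: "T1 \<subseteq> S" "T2 \<subseteq> S" "T1 \<noteq> T2" "?f T1 = ?f T2"
    unfolding inj_on_def by auto
  define A1 where "A1 = T1 - T2"
  define B1 where "B1 = T2 - T1"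
  have f1: "finite T1" "finite T2" using T fin finite_subset by auto
  have s1: "sum a T1 = sum a A1 + sum a (T1 \<inter> T2)"
    unfolding A1_def using f1 by (metis add.commute sum.Int_Diff)
  have s2: "sum a T2 = sum a B1 + sum a (T1 \<inter> T2)"
    unfolding B1_def using f1 by (metis add.commute sum.Int_Diff inf_commute)
  have md: "sum a A1 mod q = sum a B1 mod q"
    using T(4) s1 s2 by (simp add: nat_mod_eq_iff)
  have ne: "A1 \<union> B1 \<noteq> {}" using T(3) unfolding A1_def B1_def by auto
  have sub: "A1 \<subseteq> S" "B1 \<subseteq> S" "A1 \<inter> B1 = {}" using T unfolding A1_def B1_def by auto
  have posum: "sum a C > 0" if "C \<subseteq> S" "C \<noteq> {}" for C
  proof -
    have "finite C" using that fin finite_subset by auto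
    then show ?thesis using that pos by (metis all_not_in_conv in_mono sum_pos)
  qed
  show ?thesis
  proof (cases "sum a B1 \<le> sum a A1")
    case True
    have "A1 \<noteq> {}"
    proof
      assume "A1 = {}"
      then have "B1 \<noteq> {}" using ne by auto
      then have "sum a B1 > 0" using posum sub by auto
      with True \<open>A1 = {}\<close> show False by simp
    qed
    then show ?thesis using sub True md by blast
  next
    case False
    have "B1 \<noteq> {}" using False by auto
    then show ?thesis using sub False md by (intro exI[of _ B1] exI[of _ A1]) auto
  qed
qed


theorem corollary1:
  fixes a :: "nat \<Rightarrow> nat" and n t :: nat
  assumes pos: "\<And>i. i \<le> n \<Longrightarrow> a i > 0"
    and incr: "\<And>i j. i < j \<Longrightarrow> j \<le> n \<Longrightarrow> a i < a j"
    and coprime: "Gcd (a ` {0..n}) = 1"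
    and solvable: "\<exists>x :: nat \<Rightarrow> nat. (\<Sum>i=0..n. a i * x i) = t"
  shows "\<exists>x :: nat \<Rightarrow> nat. (\<Sum>i=0..n. a i * x i) = t \<and>
           real (card {i \<in> {0..n}. x i \<noteq> 0}) \<le> log 2 (real (a 0)) + 1"
proof -
  define sol where "sol x \<longleftrightarrow> (\<Sum>i=0..n. a i * x i) = t" for x :: "nat \<Rightarrow> nat"
  define supp where "supp x = {i \<in> {0..n}. x i \<noteq> 0}" for x :: "nat \<Rightarrow> nat"
  define S' where "S' x = {i \<in> {1..n}. x i \<noteq> 0}" for x :: "nat \<Rightarrow> nat"
  define mu where "mu x = (n+2) * (t - a 0 * x 0) + card (supp x)" for x :: "nat \<Rightarrow> nat"
  have a0: "a 0 > 0" using pos by simp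
  have le_t: "a 0 * y 0 \<le> t" if "sol y" for y
  proof -
    have "a 0 * y 0 \<le> (\<Sum>i=0..n. a i * y i)"
      by (rule member_le_sum) auto
    then show ?thesis using that unfolding sol_def by simp
  qed
  have cardsupp: "card (supp y) \<le> n + 1" for y
  proof -
    have "card (supp y) \<le> card {0..n}" unfolding supp_def by (rule card_mono) auto
    then show ?thesis by simp
  qed
  have step: "\<exists>y. sol y \<and> mu y < mu x" if sx: "sol x" and big: "a 0 < 2 ^ card (S' x)" for x
  proof -
    have finS: "finite (S' x)" unfolding S'_def by simp
    have posS: "\<forall>i\<in>S' x. a i > 0" unfolding S'_def using pos by auto
    obtain A B where AB: "A \<subseteq> S' x" "B \<subseteq> S' x" "A \<inter> B = {}" "A \<noteq> {}"
       "sum a B \<le> sum a A" "sum a A mod a 0 = sum a B mod a 0"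
      using exists_pair[OF finS big a0 posS] by blast
    have "a 0 dvd sum a A - sum a B" using AB(5,6) by (simp add: mod_eq_dvd_iff_nat)
    then obtain m where m: "sum a A - sum a B = a 0 * m" by (auto simp: dvd_def)
    have SA: "sum a A = sum a B + m * a 0" using m AB(5) by (simp add: mult.commute)
    have finA: "finite A" using AB(1) finS finite_subset by auto
    have finB: "finite B" using AB(2) finS finite_subset by auto
    define c where "c = Min (x ` A)"
    have cle: "c \<le> x i" if "i \<in> A" for i unfolding c_def using finA that by simp
    obtain j where j: "j \<in> A" "x j = c" unfolding c_def using finA AB(4)
      by (metis (mono_tags, lifting) Min_in finite_imageI image_iff image_is_empty)
    have A1: "i \<in> A \<Longrightarrow> 1 \<le> i \<and> i \<le> n \<and> x i \<noteq> 0" for i using AB(1) unfolding S'_def by auto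
    have B1: "i \<in> B \<Longrightarrow> 1 \<le> i \<and> i \<le> n \<and> x i \<noteq> 0" for i using AB(2) unfolding S'_def by auto
    have cpos: "c > 0" using j A1 by auto
    define y where "y i = (if i = 0 then x 0 + c * m else if i \<in> A then x i - c
        else if i \<in> B then x i + c else x i)" for i
    have key: "a i * y i + (if i \<in> A then a i * c else 0) =
        a i * x i + (if i \<in> B then a i * c else 0) + (if i = 0 then a 0 * c * m else 0)" for i
    proof -
      consider "i = 0" | "i \<noteq> 0" "i \<in> A" | "i \<noteq> 0" "i \<notin> A" "i \<in> B" | "i \<noteq> 0" "i \<notin> A" "i \<notin> B"
        by blast
      then show ?thesis
      proof cases
        case 1 then show ?thesis using A1 B1 unfolding y_def by (auto simp: algebra_simps)
      next
        case 2 then have "i \<notin> B" using AB(3) by auto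
        then show ?thesis using 2 cle[OF 2(2)] unfolding y_def
          by (simp add: algebra_simps diff_mult_distrib2)
      next
        case 3 then show ?thesis unfolding y_def by (simp add: algebra_simps)
      next
        case 4 then show ?thesis unfolding y_def by simp
      qed
    qed
    have "(\<Sum>i=0..n. a i * y i + (if i \<in> A then a i * c else 0)) =
        (\<Sum>i=0..n. a i * x i + (if i \<in> B then a i * c else 0) + (if i = 0 then a 0 * c * m else 0))"
      using key by simp
    moreover have "(\<Sum>i=0..n. (if i \<in> A then a i * c else 0)) = c * sum a A"
    proof -
      have "(\<Sum>i=0..n. (if i \<in> A then a i * c else 0)) = (\<Sum>i\<in>{0..n} \<inter> A. a i * c)"
        by (simp add: sum.inter_restrict)
      also have "{0..n} \<inter> A = A" using A1 by auto
      finally show ?thesis by (simp add: sum_distrib_left mult.commute)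
    qed
    moreover have "(\<Sum>i=0..n. (if i \<in> B then a i * c else 0)) = c * sum a B"
    proof -
      have "(\<Sum>i=0..n. (if i \<in> B then a i * c else 0)) = (\<Sum>i\<in>{0..n} \<inter> B. a i * c)"
        by (simp add: sum.inter_restrict)
      also have "{0..n} \<inter> B = B" using B1 by auto
      finally show ?thesis by (simp add: sum_distrib_left mult.commute)
    qed
    moreover have "(\<Sum>i=0..n. (if i = 0 then a 0 * c * m else 0)) = a 0 * c * m"
      by (simp add: sum.delta)
    ultimately have "(\<Sum>i=0..n. a i * y i) + c * sum a A = t + c * sum a B + a 0 * c * m"
      using sx unfolding sol_def by (simp add: sum.distrib)
    then have sy: "sol y" unfolding sol_def SA by (simp add: algebra_simps)
    have y0: "y 0 = x 0 + c * m" unfolding y_def by simp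
    show ?thesis
    proof (cases "m = 0")
      case False
      define D' where "D' = t - a 0 * y 0"
      have "a 0 * y 0 \<le> t" using le_t[OF sy] .
      then have "D' + a 0 * c * m = t - a 0 * x 0" unfolding D'_def y0
        by (simp add: algebra_simps)
      moreover have "a 0 * c * m \<ge> 1" using False cpos a0 by simp
      ultimately have D: "D' + 1 \<le> t - a 0 * x 0" by linarith
      have "mu y = (n+2) * D' + card (supp y)" unfolding mu_def D'_def by simp
      also have "\<dots> \<le> (n+2) * D' + (n + 1)" using cardsupp by simp
      also have "\<dots> < (n+2) * (D' + 1)" by simp
      also have "\<dots> \<le> (n+2) * (t - a 0 * x 0)" using D by (intro mult_left_mono) auto
      also have "\<dots> \<le> mu x" unfolding mu_def by simp
      finally show ?thesis using sy by blast
    next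
      case True
      have sub: "supp y \<subseteq> supp x"
      proof
        fix i assume "i \<in> supp y"
        then have i: "i \<le> n" "y i \<noteq> 0" unfolding supp_def by auto
        have "x i \<noteq> 0"
        proof (cases "i = 0")
          case True then show ?thesis using i \<open>m = 0\<close> y0 by simp
        next
          case False then show ?thesis using i B1 unfolding y_def by (auto split: if_splits)
        qed
        then show "i \<in> supp x" using i unfolding supp_def by auto
      qed
      have "j \<in> supp x" "j \<notin> supp y" using j A1 unfolding supp_def y_def by auto
      then have "supp y \<subset> supp x" using sub by blast
      then have "card (supp y) < card (supp x)"
        by (rule psubset_card_mono[rotated]) (simp add: supp_def)
      then have "mu y < mu x" unfolding mu_def using y0 True by simp
      then show ?thesis using sy by blast
    qed
  qed
  have main: "sol x \<Longrightarrow> \<exists>y. sol y \<and> 2 ^ card (S' y) \<le> a 0" for x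
  proof (induction x rule: measure_induct_rule[where f = mu])
    case (less x)
    show ?case
    proof (cases "2 ^ card (S' x) \<le> a 0")
      case True then show ?thesis using less.prems by blast
    next
      case False
      then obtain y where "sol y" "mu y < mu x" using step[OF less.prems] by force
      then show ?thesis using less.IH by blast
    qed
  qed
  obtain x0 where "sol x0" using solvable unfolding sol_def by blast
  then obtain y where sy: "sol y" and py: "2 ^ card (S' y) \<le> a 0" using main by blast
  have "supp y \<subseteq> insert 0 (S' y)" unfolding supp_def S'_def by auto
  then have "card (supp y) \<le> card (insert 0 (S' y))" by (intro card_mono) (simp_all add: S'_def)
  also have "\<dots> \<le> card (S' y) + 1" by (simp add: card_insert_le_m1 card_insert_if S'_def)
  finally have c1: "real (card (supp y)) \<le> real (card (S' y)) + 1" by linarith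
  have "real (2 ^ card (S' y)) \<le> real (a 0)" using py by linarith
  then have "2 powr real (card (S' y)) \<le> real (a 0)" by (simp add: powr_realpow)
  then have "real (card (S' y)) \<le> log 2 (real (a 0))" using a0 by (simp add: le_log_iff)
  with c1 have "real (card (supp y)) \<le> log 2 (real (a 0)) + 1" by linarith
  then show ?thesis using sy unfolding sol_def supp_def by blast
qed

end
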